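(* For every integer $k\ge1$: (a) every graph $G$ with $\mathrm{adim}(G)=k$ has clique number at most $2^k$; (b) every graph $G$ with $\mathrm{bdim}(G)=k$ has clique number at most $2^k$; (c) there exists a graph $G$ with $\mathrm{adim}(G)=\mathrm{bdim}(G)=k$ whose clique number is exactly $2^k$.
   Context: $d(x,y)$ is the length of a shortest $x$–$y$ path, with $d(x,y)=\infty$ if $x,y$ lie in different components. For an integer $k\ge1$ let $d_k(x,y)=\min\{d(x,y),k+1\}$. A set $A\subseteq V(G)$ is an adjacency resolving set if for all distinct $x,y\in V(G)$ there is $z\in A$ with $d_1(x,z)\ne d_1(y,z)$. The adjacency dimension $\mathrm{adim}(G)$ is the minimum size of an adjacency resolving set. A function $f:V(G)\to\mathbb{Z}_{\ge 0}$ is a resolving broadcast of $G$ if for all distinct $x,y\in V(G)$ there is $z\in V(G)$ with $f(z)=i>0$ and $d_i(x,z)\ne d_i(y,z)$. The broadcast dimension $\mathrm{bdim}(G)$ is the minimum of $\sum_{v\in V(G)}f(v)$ over all resolving broadcasts $f$ of $G$. *)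

theory Defs
  imports Main "HOL-Library.Extended_Nat"
begin

definition graph :: "'a set \<Rightarrow> ('a \<Rightarrow> 'a \<Rightarrow> bool) \<Rightarrow> bool" where
  "graph V E \<longleftrightarrow> finite V \<and> (\<forall>x y. E x y \<longrightarrow> x \<in> V \<and> y \<in> V)
     \<and> (\<forall>x y. E x y \<longrightarrow> E y x) \<and> (\<forall>x. \<not> E x x)"

fun walk :: "('a \<Rightarrow> 'a \<Rightarrow> bool) \<Rightarrow> 'a \<Rightarrow> 'a \<Rightarrow> nat \<Rightarrow> bool" where
  "walk E x y 0 = (x = y)"
| "walk E x y (Suc n) = (\<exists>z. E x z \<and> walk E z y n)"

definition dist :: "('a \<Rightarrow> 'a \<Rightarrow> bool) \<Rightarrow> 'a \<Rightarrow> 'a \<Rightarrow> enat" where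
  "dist E x y = (if \<exists>n. walk E x y n then enat (LEAST n. walk E x y n) else \<infinity>)"

definition dist_trunc :: "('a \<Rightarrow> 'a \<Rightarrow> bool) \<Rightarrow> nat \<Rightarrow> 'a \<Rightarrow> 'a \<Rightarrow> enat" where
  "dist_trunc E k x y = min (dist E x y) (enat (k + 1))"

definition adj_resolving :: "'a set \<Rightarrow> ('a \<Rightarrow> 'a \<Rightarrow> bool) \<Rightarrow> 'a set \<Rightarrow> bool" where
  "adj_resolving V E A \<longleftrightarrow> A \<subseteq> V \<and>
     (\<forall>x\<in>V. \<forall>y\<in>V. x \<noteq> y \<longrightarrow> (\<exists>z\<in>A. dist_trunc E 1 x z \<noteq> dist_trunc E 1 y z))"

definition adim :: "'a set \<Rightarrow> ('a \<Rightarrow> 'a \<Rightarrow> bool) \<Rightarrow> nat" where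
  "adim V E = (LEAST n. \<exists>A. adj_resolving V E A \<and> card A = n)"

definition resolving_broadcast :: "'a set \<Rightarrow> ('a \<Rightarrow> 'a \<Rightarrow> bool) \<Rightarrow> ('a \<Rightarrow> nat) \<Rightarrow> bool" where
  "resolving_broadcast V E f \<longleftrightarrow> (\<forall>v. v \<notin> V \<longrightarrow> f v = 0) \<and>
     (\<forall>x\<in>V. \<forall>y\<in>V. x \<noteq> y \<longrightarrow>
        (\<exists>z\<in>V. f z > 0 \<and> dist_trunc E (f z) x z \<noteq> dist_trunc E (f z) y z))"

definition bdim :: "'a set \<Rightarrow> ('a \<Rightarrow> 'a \<Rightarrow> bool) \<Rightarrow> nat" where
  "bdim V E = (LEAST n. \<exists>f. resolving_broadcast V E f \<and> (\<Sum>v\<in>V. f v) = n)"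

definition is_clique :: "'a set \<Rightarrow> ('a \<Rightarrow> 'a \<Rightarrow> bool) \<Rightarrow> 'a set \<Rightarrow> bool" where
  "is_clique V E C \<longleftrightarrow> C \<subseteq> V \<and> (\<forall>x\<in>C. \<forall>y\<in>C. x \<noteq> y \<longrightarrow> E x y)"

definition clique_number :: "'a set \<Rightarrow> ('a \<Rightarrow> 'a \<Rightarrow> bool) \<Rightarrow> nat" where
  "clique_number V E = Max {card C | C. is_clique V E C}"

end

theory Submission
  imports Defs "HOL-Library.FuncSet"
begin

lemma dist_w: "walk E x y n \<Longrightarrow> dist E x y = enat (LEAST n. walk E x y n)"
  unfolding dist_def by auto

lemma dist_self: "dist E x x = 0"
proof -
  have "walk E x x 0" by simp
  hence "(LEAST n. walk E x x n) = 0" by (metis Least_eq_0)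
  thus ?thesis using dist_w[of E x x 0] by (simp add: zero_enat_def)
qed

lemma dt1: "dist_trunc E 1 x y = (if x = y then 0 else if E x y then 1 else 2)"
proof (cases "x = y")
  case True thus ?thesis by (simp add: dist_trunc_def dist_self)
next
  case ne: False
  show ?thesis
  proof (cases "E x y")
    case True
    have w: "walk E x y 1" using True by simp
    have "(LEAST n. walk E x y n) = 1"
    proof (rule Least_equality)
      show "walk E x y 1" by fact
      fix m assume "walk E x y m" thus "1 \<le> m" using ne by (cases m) auto
    qed
    thus ?thesis using ne True dist_w[OF w] unfolding dist_trunc_def
      by (simp add: one_enat_def)
  next
    case False
    have "dist E x y \<ge> 2"
    proof (cases "\<exists>n. walk E x y n")
      case True
      have "walk E x y (LEAST n. walk E x y n)" using True by (rule LeastI_ex)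
      moreover have "(LEAST n. walk E x y n) \<noteq> 0" "(LEAST n. walk E x y n) \<noteq> 1"
        using ne False by (metis walk.simps(1) calculation, metis One_nat_def walk.simps(1,2) calculation)
      ultimately have "(LEAST n. walk E x y n) \<ge> 2" by linarith
      thus ?thesis using True unfolding dist_def by (simp add: numeral_eq_enat)
    next
      case False thus ?thesis unfolding dist_def by auto
    qed
    thus ?thesis using ne False unfolding dist_trunc_def
      by (simp add: min_absorb2 numeral_eq_enat one_enat_def numeral_2_eq_2)
  qed
qed

lemma dist_step:
  assumes "E x y" shows "dist E x z \<le> dist E y z + 1"
proof (cases "\<exists>n. walk E y z n")
  case True
  define n where "n = (LEAST n. walk E y z n)"
  have "walk E y z n" unfolding n_def using True by (rule LeastI_ex)
  hence w: "walk E x z (Suc n)" using assms by auto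
  hence "(LEAST m. walk E x z m) \<le> Suc n" by (rule Least_le)
  thus ?thesis using dist_w[OF w] dist_w[OF \<open>walk E y z n\<close>] unfolding n_def[symmetric]
    by (simp add: one_enat_def)
next
  case False hence "dist E y z = \<infinity>" unfolding dist_def by simp
  thus ?thesis by simp
qed

lemma dt_step:
  assumes "E x y \<or> x = y" shows "dist_trunc E r x z \<le> dist_trunc E r y z + 1"
proof -
  have h: "dist E x z \<le> dist E y z + 1" using assms dist_step[of E x y z]
    by (auto intro: order_trans[OF _ ile_eSuc] simp: eSuc_plus_1)
  show ?thesis unfolding dist_trunc_def using h
    by (cases "dist E x z"; cases "dist E y z"; auto simp: min_def one_enat_def)
qed

lemma two_vals:
  fixes T :: "enat set"
  assumes "finite T" "\<forall>a\<in>T. \<forall>b\<in>T. a \<le> b + 1"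
  shows "card T \<le> 2"
proof (cases "T = {}")
  case True thus ?thesis by simp
next
  case False
  define m where "m = Min T"
  have mT: "m \<in> T" using assms False unfolding m_def by simp
  have "T \<subseteq> {m, m+1}"
  proof
    fix v assume v: "v \<in> T"
    have "m \<le> v" using v assms unfolding m_def by simp
    moreover have "v \<le> m + 1" using v mT assms by blast
    ultimately show "v \<in> {m, m+1}"
      by (cases m; cases v; auto simp: one_enat_def)
  qed
  hence "card T \<le> card {m, m+1}" by (simp add: card_mono)
  also have "\<dots> \<le> 2" by (simp add: card_insert_le_m1)
  finally show ?thesis .
qed

lemma clique_bound:
  assumes g: "graph V E" and fin: "finite A"
    and res: "\<forall>x\<in>V. \<forall>y\<in>V. x \<noteq> y \<longrightarrow> (\<exists>z\<in>A. dist_trunc E (r z) x z \<noteq> dist_trunc E (r z) y z)"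
    and cl: "is_clique V E C"
  shows "card C \<le> 2 ^ card A"
proof -
  have CV: "C \<subseteq> V" using cl unfolding is_clique_def by simp
  have "finite V" using g unfolding graph_def by simp
  hence finC: "finite C" using CV by (rule finite_subset[rotated])
  define T where "T z = (\<lambda>x. dist_trunc E (r z) x z) ` C" for z
  define gg where "gg x = restrict (\<lambda>z. dist_trunc E (r z) x z) A" for x
  have inj: "inj_on gg C"
  proof (rule inj_onI)
    fix x y assume "x \<in> C" "y \<in> C" "gg x = gg y"
    show "x = y"
    proof (rule ccontr)
      assume "x \<noteq> y"
      then obtain z where "z \<in> A" "dist_trunc E (r z) x z \<noteq> dist_trunc E (r z) y z"
        using res \<open>x \<in> C\<close> \<open>y \<in> C\<close> CV by (meson subsetD)
      moreover have "gg x z = gg y z" using \<open>gg x = gg y\<close> by simp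
      ultimately show False using \<open>z \<in> A\<close> unfolding gg_def by simp
    qed
  qed
  have img: "gg ` C \<subseteq> PiE A T" unfolding gg_def T_def PiE_def extensional_def Pi_def by auto
  have "card C = card (gg ` C)" using inj by (simp add: card_image)
  also have "\<dots> \<le> card (PiE A T)"
    by (rule card_mono[OF _ img]) (simp add: finite_PiE fin finC T_def)
  also have "\<dots> = (\<Prod>z\<in>A. card (T z))" by (simp add: card_PiE fin)
  also have "\<dots> \<le> 2 ^ card A"
  proof (rule prod_le_power)
    fix z assume "z \<in> A"
    have "\<forall>a\<in>T z. \<forall>b\<in>T z. a \<le> b + 1"
    proof (intro ballI)
      fix a b assume "a \<in> T z" "b \<in> T z"
      then obtain x y where "x \<in> C" "y \<in> C" "a = dist_trunc E (r z) x z" "b = dist_trunc E (r z) y z"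
        unfolding T_def by auto
      moreover have "E x y \<or> x = y" using cl \<open>x \<in> C\<close> \<open>y \<in> C\<close> unfolding is_clique_def by blast
      ultimately show "a \<le> b + 1" using dt_step[of E x y "r z" z] by simp
    qed
    thus "0 \<le> card (T z) \<and> card (T z) \<le> 2"
      using two_vals[of "T z"] finC unfolding T_def by simp
  qed auto
  finally show ?thesis .
qed


lemma cn_le:
  assumes g: "graph V E" and b: "\<And>C. is_clique V E C \<Longrightarrow> card C \<le> b"
  shows "clique_number V E \<le> b"
proof -
  have fin: "finite V" using g unfolding graph_def by simp
  have "{card C | C. is_clique V E C} \<subseteq> card ` Pow V" unfolding is_clique_def by auto
  hence f: "finite {card C | C. is_clique V E C}" using fin by (meson finite_Pow_iff finite_imageI finite_subset)
  have "is_clique V E {}" unfolding is_clique_def by simp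
  hence ne: "{card C | C. is_clique V E C} \<noteq> {}" by blast
  show ?thesis unfolding clique_number_def using f ne b by (subst Max_le_iff) auto
qed

lemma cn_ge:
  assumes g: "graph V E" and c: "is_clique V E C"
  shows "card C \<le> clique_number V E"
proof -
  have fin: "finite V" using g unfolding graph_def by simp
  have "{card C | C. is_clique V E C} \<subseteq> card ` Pow V" unfolding is_clique_def by auto
  hence f: "finite {card C | C. is_clique V E C}" using fin by (meson finite_Pow_iff finite_imageI finite_subset)
  show ?thesis unfolding clique_number_def using f c by (intro Max_ge) auto
qed

lemma dt_sep: "x \<noteq> y \<Longrightarrow> dist_trunc E 1 x x \<noteq> dist_trunc E 1 y x"
  using dt1[of E x x] dt1[of E y x] by auto

lemma V_res: "adj_resolving V E V"
  unfolding adj_resolving_def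
proof (intro conjI ballI impI)
  fix x y assume "x \<in> V" "y \<in> V" "x \<noteq> y"
  thus "\<exists>z\<in>V. dist_trunc E 1 x z \<noteq> dist_trunc E 1 y z" using dt_sep[of x y E] by (intro bexI[of _ x])
qed simp

lemma V_bres: "resolving_broadcast V E (\<lambda>v. if v \<in> V then 1 else 0)"
  unfolding resolving_broadcast_def
proof (intro conjI ballI allI impI)
  fix x y assume "x \<in> V" "y \<in> V" "x \<noteq> y"
  thus "\<exists>z\<in>V. 0 < (if z \<in> V then 1 else 0::nat) \<and> dist_trunc E (if z \<in> V then 1 else 0) x z \<noteq> dist_trunc E (if z \<in> V then 1 else 0) y z"
    using dt_sep[of x y E] by auto
qed auto

lemma adim_bound:
  assumes g: "graph V E" and c: "is_clique V E C"
  shows "card C \<le> 2 ^ adim V E"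
proof -
  have "\<exists>A. adj_resolving V E A \<and> card A = adim V E" unfolding adim_def
    by (rule LeastI_ex) (use V_res in blast)
  then obtain A where A: "adj_resolving V E A" "card A = adim V E" by blast
  have "finite A" using A g unfolding adj_resolving_def graph_def by (meson finite_subset)
  from clique_bound[OF g this _ c, of "\<lambda>_. 1"] A show ?thesis
    unfolding adj_resolving_def by simp
qed

lemma card_supp_le:
  assumes "finite V"
  shows "card {z\<in>V. 0 < f z} \<le> (\<Sum>v\<in>V. f v)"
proof -
  have "card {z\<in>V. 0 < f z} = (\<Sum>v\<in>{z\<in>V. 0 < f z}. 1)" by simp
  also have "\<dots> \<le> (\<Sum>v\<in>{z\<in>V. 0 < f z}. f v)" by (rule sum_mono) auto
  also have "\<dots> \<le> (\<Sum>v\<in>V. f v)" by (rule sum_mono2) (use assms in auto)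
  finally show ?thesis .
qed

lemma bres_bound:
  assumes g: "graph V E" and c: "is_clique V E C" and f: "resolving_broadcast V E f"
  shows "card C \<le> 2 ^ (\<Sum>v\<in>V. f v)"
proof -
  have fin: "finite V" using g unfolding graph_def by simp
  have "card C \<le> 2 ^ card {z\<in>V. 0 < f z}"
  proof (rule clique_bound[OF g _ _ c, of _ f])
    show "finite {z \<in> V. 0 < f z}" using fin by simp
    show "\<forall>x\<in>V. \<forall>y\<in>V. x \<noteq> y \<longrightarrow> (\<exists>z\<in>{z \<in> V. 0 < f z}. dist_trunc E (f z) x z \<noteq> dist_trunc E (f z) y z)"
    proof (intro ballI impI)
      fix x y assume "x \<in> V" "y \<in> V" "x \<noteq> y"
      then obtain z where "z \<in> V" "0 < f z" "dist_trunc E (f z) x z \<noteq> dist_trunc E (f z) y z"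
        using f unfolding resolving_broadcast_def by blast
      thus "\<exists>z\<in>{z \<in> V. 0 < f z}. dist_trunc E (f z) x z \<noteq> dist_trunc E (f z) y z" by blast
    qed
  qed
  also have "\<dots> \<le> 2 ^ (\<Sum>v\<in>V. f v)" by (rule power_increasing) (use card_supp_le[OF fin] in auto)
  finally show ?thesis .
qed

lemma bdim_bound:
  assumes g: "graph V E" and c: "is_clique V E C"
  shows "card C \<le> 2 ^ bdim V E"
proof -
  have "\<exists>f. resolving_broadcast V E f \<and> (\<Sum>v\<in>V. f v) = bdim V E" unfolding bdim_def
    by (rule LeastI_ex) (use V_bres in blast)
  then obtain f where F: "resolving_broadcast V E f" "(\<Sum>v\<in>V. f v) = bdim V E" by blast
  have "card C \<le> 2 ^ (\<Sum>v\<in>V. f v)" by (rule bres_bound[OF g c F(1)])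
  thus ?thesis using F(2) by simp
qed

lemma bits_differ:
  fixes m m' :: nat
  assumes "m < 2 ^ k" "m' < 2 ^ k" "m \<noteq> m'"
  shows "\<exists>z<k. bit m z \<noteq> bit m' z"
proof (rule ccontr)
  assume "\<not> ?thesis"
  hence "\<forall>z. bit (take_bit k m) z = bit (take_bit k m') z" by (auto simp: bit_take_bit_iff)
  hence "take_bit k m = take_bit k m'" by (simp add: bit_eq_iff)
  thus False using assms by (metis take_bit_nat_eq_self_iff)
qed


definition exE :: "nat \<Rightarrow> nat \<Rightarrow> nat \<Rightarrow> bool" where
  "exE k x y \<longleftrightarrow> x < k + 2^k \<and> y < k + 2^k \<and> x \<noteq> y \<and>
     ((k \<le> x \<and> k \<le> y) \<or> (x < k \<and> k \<le> y \<and> bit (y - k) x) \<or> (y < k \<and> k \<le> x \<and> bit (x - k) y))"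

lemma ex_graph: "graph {..<k + 2^k} (exE k)"
  unfolding graph_def exE_def by auto

lemma ex_clique: "is_clique {..<k + 2^k} (exE k) {k..<k + 2^k}"
  unfolding is_clique_def exE_def by auto

lemma ex_res: "adj_resolving {..<k + 2^k} (exE k) {..<k}"
  unfolding adj_resolving_def
proof (intro conjI ballI impI)
  fix x y assume x: "x \<in> {..<k + 2^k}" and y: "y \<in> {..<k + 2^k}" and ne: "x \<noteq> y"
  show "\<exists>z\<in>{..<k}. dist_trunc (exE k) 1 x z \<noteq> dist_trunc (exE k) 1 y z"
  proof (cases "x < k")
    case True thus ?thesis using dt_sep[OF ne, of "exE k"] by (intro bexI[of _ x]) auto
  next
    case xk: False
    show ?thesis
    proof (cases "y < k")
      case True thus ?thesis using dt_sep[OF ne[symmetric], of "exE k"] by (intro bexI[of _ y]) auto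
    next
      case yk: False
      have "x - k < 2^k" "y - k < 2^k" "x - k \<noteq> y - k" using x y ne xk yk by auto
      then obtain z where z: "z < k" "bit (x - k) z \<noteq> bit (y - k) z" using bits_differ by blast
      have "exE k x z = bit (x - k) z" "exE k y z = bit (y - k) z"
        using x y xk yk z(1) unfolding exE_def by auto
      moreover have "x \<noteq> z" "y \<noteq> z" using xk yk z(1) by auto
      ultimately have "dist_trunc (exE k) 1 x z \<noteq> dist_trunc (exE k) 1 y z"
        using z(2) dt1[of "exE k" x z] dt1[of "exE k" y z] by auto
      thus ?thesis using z(1) by auto
    qed
  qed
qed simp

lemma ex_bres: "resolving_broadcast {..<k + 2^k} (exE k) (\<lambda>v. if v < k then 1 else 0)"
  unfolding resolving_broadcast_def
proof (intro conjI ballI allI impI)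
  fix x y assume "x \<in> {..<k + 2^k}" "y \<in> {..<k + 2^k}" "x \<noteq> y"
  then obtain z where "z \<in> {..<k}" "dist_trunc (exE k) 1 x z \<noteq> dist_trunc (exE k) 1 y z"
    using ex_res unfolding adj_resolving_def by blast
  thus "\<exists>z\<in>{..<k + 2^k}. 0 < (if z < k then 1 else 0::nat) \<and>
     dist_trunc (exE k) (if z < k then 1 else 0) x z \<noteq> dist_trunc (exE k) (if z < k then 1 else 0) y z"
    by (intro bexI[of _ z]) auto
qed auto

lemma ex_sum: "(\<Sum>v\<in>{..<k + 2^k}. (if v < k then 1 else 0::nat)) = k"
proof -
  have "{..<k + 2^k} \<inter> {v. v < k} = {..<k}" by auto
  thus ?thesis by (simp add: sum.If_cases)
qed

lemma part_c:
  "graph {..<k + 2^k} (exE k) \<and> adim {..<k + 2^k} (exE k) = k \<and> bdim {..<k + 2^k} (exE k) = k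
     \<and> clique_number {..<k + 2^k} (exE k) = 2 ^ k"
proof -
  let ?V = "{..<k + 2^k}" and ?E = "exE k" and ?C = "{k..<k + 2^k}"
  have cC: "card ?C = 2^k" by simp
  have a1: "adim ?V ?E \<le> k" unfolding adim_def
    by (rule Least_le) (use ex_res in \<open>intro exI[of _ "{..<k}"]; simp\<close>)
  have a2: "2^k \<le> (2::nat) ^ adim ?V ?E" using adim_bound[OF ex_graph ex_clique] cC by simp
  have "k \<le> adim ?V ?E" by (rule power_le_imp_le_exp[OF _ a2]) simp
  hence a: "adim ?V ?E = k" using a1 by simp
  have b1: "bdim ?V ?E \<le> k" unfolding bdim_def
    by (rule Least_le) (use ex_bres ex_sum in \<open>intro exI[of _ "\<lambda>v. if v < k then 1 else 0"]; simp\<close>)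
  have b2: "2^k \<le> (2::nat) ^ bdim ?V ?E" using bdim_bound[OF ex_graph ex_clique] cC by simp
  have "k \<le> bdim ?V ?E" by (rule power_le_imp_le_exp[OF _ b2]) simp
  hence b: "bdim ?V ?E = k" using b1 by simp
  have "clique_number ?V ?E \<le> 2^k"
  proof -
    have "clique_number ?V ?E \<le> 2 ^ adim ?V ?E" by (rule cn_le[OF ex_graph adim_bound[OF ex_graph]])
    thus ?thesis using a by simp
  qed
  moreover have "2^k \<le> clique_number ?V ?E" using cn_ge[OF ex_graph ex_clique] cC by simp
  ultimately show ?thesis using a b ex_graph by simp
qed

theorem corollary3p7:
  fixes k :: nat
  assumes "k \<ge> 1"
  shows "(\<forall>(V :: 'a set) E. graph V E \<and> adim V E = k \<longrightarrow> clique_number V E \<le> 2 ^ k)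
       \<and> (\<forall>(V :: 'a set) E. graph V E \<and> bdim V E = k \<longrightarrow> clique_number V E \<le> 2 ^ k)
       \<and> (\<exists>(V :: nat set) E. graph V E \<and> adim V E = k \<and> bdim V E = k
              \<and> clique_number V E = 2 ^ k)"
proof (intro conjI allI impI)
  fix V :: "'a set" and E assume h: "graph V E \<and> adim V E = k"
  hence g: "graph V E" and a: "adim V E = k" by auto
  have "clique_number V E \<le> 2 ^ adim V E" by (rule cn_le[OF g adim_bound[OF g]])
  thus "clique_number V E \<le> 2 ^ k" using a by simp
next
  fix V :: "'a set" and E assume h: "graph V E \<and> bdim V E = k"
  hence g: "graph V E" and a: "bdim V E = k" by auto
  have "clique_number V E \<le> 2 ^ bdim V E" by (rule cn_le[OF g bdim_bound[OF g]])
  thus "clique_number V E \<le> 2 ^ k" using a by simp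
next
  show "\<exists>(V :: nat set) E. graph V E \<and> adim V E = k \<and> bdim V E = k \<and> clique_number V E = 2 ^ k"
    using part_c by blast
qed

end
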